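(* Let $\lambda\in P$, $1\le k\le n-1$, $r\ge2$, $m\ge1$. If $\lambda$ has a neighborhood of type $(m(k+1),m(r-1))$, then $\lambda$ has a neighborhood of type $(k+1,r-1)$. If $d\ge1$ and $\lambda$ has a neighborhood of type $(m(k+1)+d,m(r-1))$, then $\lambda$ has two (distinct) neighborhoods of type $(k+1,r-1)$.
   Context: Let $P=\mathbb Z^n$. For $\lambda\in P$, $\rho(\lambda)$ is the unique permutation of $(\frac{n-1}2,\frac{n-3}2,\dots,-\frac{n-1}2)$ with $\rho(\lambda)_i>\rho(\lambda)_j$ iff $\lambda_i>\lambda_j$ or ($\lambda_i=\lambda_j$ and $i<j$). For integers $a\ge2,b\ge1$, an ordered pair $(i,j)$ is a neighborhood of type $(a,b)$ in $\lambda$ if $\rho(\lambda)_i-\rho(\lambda)_j=a-1$ and either $\lambda_i-\lambda_j\le b-1$, or $\lambda_i-\lambda_j=b$ and $j<i$. *)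

theory Defs
  imports Main "HOL.Real"
begin

text \<open>Elements of P = Z^n are represented as integer lists of length n,
  indexed 0..n-1 (only the relative order of indices matters).\<close>

definition rho :: "int list \<Rightarrow> nat \<Rightarrow> real" where
  "rho lam i = (real (length lam) - 1) / 2
     - real (card {j. j < length lam \<and> (lam!j > lam!i \<or> (lam!j = lam!i \<and> j < i))})"

definition is_nbhd :: "int list \<Rightarrow> nat \<Rightarrow> nat \<Rightarrow> nat \<times> nat \<Rightarrow> bool" where
  "is_nbhd lam a b p = (case p of (i, j) \<Rightarrow>
     i < length lam \<and> j < length lam \<and>
     rho lam i - rho lam j = real a - 1 \<and>
     (lam!i - lam!j \<le> int b - 1 \<or> (lam!i - lam!j = int b \<and> j < i)))"

definition has_nbhd :: "int list \<Rightarrow> nat \<Rightarrow> nat \<Rightarrow> bool" where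
  "has_nbhd lam a b = (\<exists>p. is_nbhd lam a b p)"

end

theory Submission imports Defs begin
definition good :: "(nat \<Rightarrow> int) \<Rightarrow> (nat \<Rightarrow> nat) \<Rightarrow> nat \<Rightarrow> int \<Rightarrow> nat \<Rightarrow> bool" where
  "good mu g k c t = (mu t - mu (t + k) < c \<or> (mu t - mu (t + k) = c \<and> g (t + k) < g t))"

lemma chain:
  assumes H: "\<And>s t. s < t \<Longrightarrow> t \<le> N \<Longrightarrow> mu t \<le> mu s \<and> (mu t = mu s \<longrightarrow> g s < g t)"
  shows "1 \<le> m \<Longrightarrow> s + m*(k+1) - 1 \<le> N \<Longrightarrow>
    (mu s - mu (s + m*(k+1) - 1) < int m * c \<or> (mu s - mu (s + m*(k+1) - 1) = int m * c \<and> g (s + m*(k+1) - 1) < g s))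
    \<Longrightarrow> \<exists>j<m. good mu g k c (s + j*(k+1))"
proof (induction m arbitrary: s)
  case 0 then show ?case by simp
next
  case (Suc m)
  show ?case
  proof (cases "m = 0")
    case True
    then show ?thesis using Suc.prems by (auto simp: good_def)
  next
    case False
    show ?thesis
    proof (cases "good mu g k c s")
      case True then show ?thesis by (intro exI[of _ 0]) auto
    next
      case ng: False
      define e where "e = s + Suc m * (k+1) - 1"
      have e2: "e = (s + k + 1) + m*(k+1) - 1" using False by (simp add: e_def)
      have le: "s + k + 1 + m*(k+1) - 1 \<le> N" using Suc.prems e2 e_def by simp
      have le1: "s + k + 1 \<le> N" using le False by (cases m) auto
      have gap: "mu (s+k+1) \<le> mu (s+k) \<and> (mu (s+k+1) = mu (s+k) \<longrightarrow> g (s+k) < g (s+k+1))"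
        using H[of "s+k" "s+k+1"] le1 by simp
      have d0: "mu s - mu (s+k) \<ge> c" and d0e: "mu s - mu (s+k) = c \<Longrightarrow> g s \<le> g (s+k)"
        using ng by (auto simp: good_def)
      have pre: "mu s - mu e < int (Suc m) * c \<or> (mu s - mu e = int (Suc m) * c \<and> g e < g s)"
        using Suc.prems(3) e_def by simp
      have "mu (s+k+1) - mu e < int m * c \<or> (mu (s+k+1) - mu e = int m * c \<and> g e < g (s+k+1))"
      proof (cases "mu s - mu e < int (Suc m) * c")
        case True then show ?thesis using d0 gap by (simp add: algebra_simps)
      next
        case F: False
        then have eq: "mu s - mu e = int (Suc m) * c" and ge: "g e < g s" using pre by auto
        show ?thesis
        proof (cases "mu s - mu (s+k) = c \<and> mu (s+k+1) = mu (s+k)")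
          case True then show ?thesis using eq ge gap d0e by (simp add: algebra_simps)
        next
          case False then show ?thesis using eq gap d0 by (auto simp: algebra_simps)
        qed
      qed
      then obtain j where "j < m" "good mu g k c (s+k+1 + j*(k+1))"
        using Suc.IH[of "s+k+1"] False le e2 by auto
      then show ?thesis by (intro exI[of _ "Suc j"]) (auto simp: algebra_simps)
    qed
  qed
qed
lemma family:
  assumes H: "\<And>s t. s < t \<Longrightarrow> t \<le> N \<Longrightarrow> mu t \<le> mu s \<and> (mu t = mu s \<longrightarrow> g s < g t)"
    and m: "1 \<le> m" and ps: "p \<le> s" and sq: "s + m*(k+1) - 1 \<le> q" and qN: "q \<le> N"
    and pre: "mu p - mu q < int m * c \<or> (mu p - mu q = int m * c \<and> g q < g p)"
  shows "\<exists>j<m. good mu g k c (s + j*(k+1))"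
proof (rule chain[OF H m])
  define e where "e = s + m*(k+1) - 1"
  have se: "s \<le> e" using m by (simp add: e_def)
  show "s + m*(k+1) - 1 \<le> N" using sq qN by simp
  have H': "\<And>s t. s \<le> t \<Longrightarrow> t \<le> N \<Longrightarrow> mu t \<le> mu s \<and> (mu t = mu s \<longrightarrow> g s \<le> g t)"
  proof -
    fix s t :: nat assume st: "s \<le> t" "t \<le> N"
    show "mu t \<le> mu s \<and> (mu t = mu s \<longrightarrow> g s \<le> g t)"
    proof (cases "s = t")
      case False then show ?thesis using H[of s t] st by force
    qed simp
  qed
  have a: "mu s \<le> mu p" "mu s = mu p \<Longrightarrow> g p \<le> g s" using H'[OF ps] se sq qN e_def by auto
  have b: "mu q \<le> mu e" "mu q = mu e \<Longrightarrow> g e \<le> g q" using H'[of e q] sq qN e_def by auto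
  show "mu s - mu e < int m * c \<or> (mu s - mu e = int m * c \<and> g e < g s)"
    using a b pre by fastforce
qed


definition Rel :: "int list \<Rightarrow> nat \<Rightarrow> nat \<Rightarrow> bool" where
  "Rel lam j i = (lam!j > lam!i \<or> (lam!j = lam!i \<and> j < i))"

definition pos :: "int list \<Rightarrow> nat \<Rightarrow> nat" where
  "pos lam i = card {j. j < length lam \<and> Rel lam j i}"

lemma rho_pos: "rho lam i = (real (length lam) - 1) / 2 - real (pos lam i)"
  unfolding rho_def pos_def Rel_def by simp

lemma pos_less:
  assumes "j < length lam" "Rel lam i j" "i < length lam"
  shows "pos lam i < pos lam j"
  unfolding pos_def
proof (rule psubset_card_mono)
  show "finite {ja. ja < length lam \<and> Rel lam ja j}" by simp
  show "{j. j < length lam \<and> Rel lam j i} \<subset> {ja. ja < length lam \<and> Rel lam ja j}"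
  proof
    show "{j. j < length lam \<and> Rel lam j i} \<subseteq> {ja. ja < length lam \<and> Rel lam ja j}"
      using assms(2) unfolding Rel_def by auto
    show "{j. j < length lam \<and> Rel lam j i} \<noteq> {ja. ja < length lam \<and> Rel lam ja j}"
      using assms(2,3) unfolding Rel_def by auto
  qed
qed

lemma Rel_total: "i \<noteq> j \<Longrightarrow> Rel lam i j \<or> Rel lam j i"
  unfolding Rel_def by auto

lemma pos_lt: "i < length lam \<Longrightarrow> pos lam i < length lam"
proof -
  assume i: "i < length lam"
  have "{j. j < length lam \<and> Rel lam j i} \<subseteq> {..<length lam} - {i}" unfolding Rel_def by auto
  then have "pos lam i \<le> card ({..<length lam} - {i})" unfolding pos_def by (intro card_mono) auto
  then show ?thesis using i by simp
qed

lemma pos_inj: "inj_on (pos lam) {..<length lam}"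
proof (rule inj_onI)
  fix x y assume "x \<in> {..<length lam}" "y \<in> {..<length lam}" "pos lam x = pos lam y"
  then show "x = y" using Rel_total[of x y lam] pos_less[of x lam y] pos_less[of y lam x] by force
qed

lemma pos_img: "pos lam ` {..<length lam} = {..<length lam}"
  by (rule endo_inj_surj) (auto simp: pos_lt pos_inj)

definition ww :: "int list \<Rightarrow> nat \<Rightarrow> nat" where
  "ww lam = inv_into {..<length lam} (pos lam)"

lemma ww_props: assumes "t < length lam"
  shows "ww lam t < length lam" "pos lam (ww lam t) = t"
proof -
  have t: "t \<in> pos lam ` {..<length lam}" using pos_img assms by auto
  show "ww lam t < length lam" unfolding ww_def using inv_into_into[OF t] by simp
  show "pos lam (ww lam t) = t" unfolding ww_def using f_inv_into_f[OF t] .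
qed

lemma ww_pos: "i < length lam \<Longrightarrow> ww lam (pos lam i) = i"
  unfolding ww_def by (simp add: pos_inj)

lemma Hlam: assumes "s < t" "t \<le> length lam - 1" "0 < length lam"
  shows "lam!(ww lam t) \<le> lam!(ww lam s) \<and> (lam!(ww lam t) = lam!(ww lam s) \<longrightarrow> ww lam s < ww lam t)"
proof -
  have t: "t < length lam" and s: "s < length lam" using assms by auto
  have ne: "ww lam s \<noteq> ww lam t" using ww_props(2)[OF s] ww_props(2)[OF t] assms(1) by (metis less_irrefl)
  have "\<not> Rel lam (ww lam t) (ww lam s)"
    using pos_less[of "ww lam s" lam "ww lam t"] ww_props[OF s] ww_props[OF t] assms(1) by auto
  then have "Rel lam (ww lam s) (ww lam t)" using Rel_total ne by blast
  then show ?thesis unfolding Rel_def by auto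
qed


lemma nb_extract:
  assumes "is_nbhd lam A b (i,j)" "1 \<le> A"
  shows "i < length lam" "j < length lam" "pos lam j = pos lam i + A - 1"
    "lam!i - lam!j < int b \<or> (lam!i - lam!j = int b \<and> j < i)"
proof -
  show "i < length lam" "j < length lam" using assms unfolding is_nbhd_def by auto
  have "real (pos lam j) - real (pos lam i) = real A - 1"
    using assms(1) unfolding is_nbhd_def rho_pos by auto
  then show "pos lam j = pos lam i + A - 1" using assms(2) by linarith
  show "lam!i - lam!j < int b \<or> (lam!i - lam!j = int b \<and> j < i)"
    using assms(1) unfolding is_nbhd_def by auto
qed

lemma good_nbhd:
  assumes "t + k < length lam" "good (\<lambda>t. lam!(ww lam t)) (ww lam) k (int b) t"
  shows "is_nbhd lam (k+1) b (ww lam t, ww lam (t+k))"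
proof -
  have t: "t < length lam" using assms by simp
  note a = ww_props[OF t] ww_props[OF assms(1)]
  show ?thesis using assms(2) a unfolding is_nbhd_def rho_pos good_def by auto
qed

theorem lemma4p3:
  fixes lam :: "int list" and k r m :: nat
  assumes "1 \<le> k" and "k \<le> length lam - 1" and "2 \<le> r" and "1 \<le> m"
  shows "(has_nbhd lam (m * (k + 1)) (m * (r - 1)) \<longrightarrow> has_nbhd lam (k + 1) (r - 1))
    \<and> (\<forall>d::nat. 1 \<le> d \<longrightarrow> has_nbhd lam (m * (k + 1) + d) (m * (r - 1)) \<longrightarrow>
         (\<exists>p q. p \<noteq> q \<and> is_nbhd lam (k + 1) (r - 1) p \<and> is_nbhd lam (k + 1) (r - 1) q))"
proof -
  define mu where "mu = (\<lambda>t. lam!(ww lam t))"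
  define c where "c = int (r - 1)"
  have cm: "int (m * (r - 1)) = int m * c" by (simp add: c_def)
  have H: "\<And>s t. s < t \<Longrightarrow> t \<le> length lam - 1 \<Longrightarrow> mu t \<le> mu s \<and> (mu t = mu s \<longrightarrow> ww lam s < ww lam t)"
    if "0 < length lam" using Hlam that unfolding mu_def by blast
  have P1: "has_nbhd lam (k + 1) (r - 1)" if h1: "has_nbhd lam (m * (k + 1)) (m * (r - 1))"
  proof -
    obtain i j where ij: "is_nbhd lam (m * (k + 1)) (m * (r - 1)) (i,j)"
      using h1 unfolding has_nbhd_def by (metis prod.exhaust)
    have A: "1 \<le> m * (k+1)" using assms by simp
    note e = nb_extract[OF ij A]
    define p where "p = pos lam i"
    define q where "q = pos lam j"
    have n0: "0 < length lam" using e(1) by linarith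
    have q: "q < length lam" using e pos_lt unfolding q_def by blast
    have mp: "mu p = lam!i" "mu q = lam!j" "ww lam p = i" "ww lam q = j"
      using ww_pos[OF e(1)] ww_pos[OF e(2)] unfolding mu_def p_def q_def by auto
    have H0: "\<And>s t. s < t \<Longrightarrow> t \<le> length lam - 1 \<Longrightarrow> mu t \<le> mu s \<and> (mu t = mu s \<longrightarrow> ww lam s < ww lam t)"
      using H n0 by blast
    have pre: "mu p - mu q < int m * c \<or> (mu p - mu q = int m * c \<and> ww lam q < ww lam p)"
      using e(4) mp cm by auto
    have qq: "q = p + m*(k+1) - 1" using e(3) unfolding p_def q_def by simp
    have "\<exists>j<m. good mu (ww lam) k c (p + j*(k+1))"
      by (rule family[OF H0 assms(4) _ _ _ pre]) (use q qq in auto)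
    then obtain j0 where j0: "j0 < m" "good mu (ww lam) k c (p + j0*(k+1))" by blast
    have "p + j0*(k+1) + k \<le> p + m*(k+1) - 1"
    proof -
      have "Suc j0 * (k+1) \<le> m * (k+1)" using j0(1) by (intro mult_le_mono1) simp
      then show ?thesis by simp
    qed
    then have "p + j0*(k+1) + k < length lam" using q qq by simp
    from good_nbhd[OF this] j0(2) show ?thesis unfolding has_nbhd_def mu_def c_def by blast
  qed
  have P2: "\<exists>p q. p \<noteq> q \<and> is_nbhd lam (k + 1) (r - 1) p \<and> is_nbhd lam (k + 1) (r - 1) q"
    if d: "1 \<le> d" "has_nbhd lam (m * (k + 1) + d) (m * (r - 1))" for d
  proof -
    obtain i j where ij: "is_nbhd lam (m * (k + 1) + d) (m * (r - 1)) (i,j)"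
      using d(2) unfolding has_nbhd_def by (metis prod.exhaust)
    have A: "1 \<le> m * (k+1) + d" using assms by simp
    note e = nb_extract[OF ij A]
    define p where "p = pos lam i"
    define q where "q = pos lam j"
    have n0: "0 < length lam" using e(1) by linarith
    have q: "q < length lam" using e pos_lt unfolding q_def by blast
    have mp: "mu p = lam!i" "mu q = lam!j" "ww lam p = i" "ww lam q = j"
      using ww_pos[OF e(1)] ww_pos[OF e(2)] unfolding mu_def p_def q_def by auto
    have qq: "q = p + m*(k+1) + d - 1" using e(3) unfolding p_def q_def by simp
    have pre: "mu p - mu q < int m * c \<or> (mu p - mu q = int m * c \<and> ww lam q < ww lam p)"
      using e(4) mp cm by auto
    have H0: "\<And>s t. s < t \<Longrightarrow> t \<le> length lam - 1 \<Longrightarrow> mu t \<le> mu s \<and> (mu t = mu s \<longrightarrow> ww lam s < ww lam t)"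
      using H n0 by blast
    have "\<exists>j<m. good mu (ww lam) k c (p + j*(k+1))"
      by (rule family[OF H0 assms(4) _ _ _ pre]) (use q qq in auto)
    then obtain j1 where j1: "j1 < m" "good mu (ww lam) k c (p + j1*(k+1))" by blast
    have "\<exists>j<m. good mu (ww lam) k c (p + 1 + j*(k+1))"
      by (rule family[OF H0 assms(4) _ _ _ pre]) (use q qq d(1) in auto)
    then obtain j2 where j2: "j2 < m" "good mu (ww lam) k c (p + 1 + j2*(k+1))" by blast
    have b1: "p + j1*(k+1) + k < length lam"
    proof -
      have "Suc j1 * (k+1) \<le> m * (k+1)" using j1(1) by (intro mult_le_mono1) simp
      then show ?thesis using q qq d(1) by simp
    qed
    have b2: "p + 1 + j2*(k+1) + k < length lam"
    proof -
      have "Suc j2 * (k+1) \<le> m * (k+1)" using j2(1) by (intro mult_le_mono1) simp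
      then show ?thesis using q qq d(1) by simp
    qed
    have ne: "p + j1*(k+1) \<noteq> p + 1 + j2*(k+1)"
    proof
      assume "p + j1*(k+1) = p + 1 + j2*(k+1)"
      then have "j1*(k+1) = 1 + j2*(k+1)" by simp
      then have "(j1*(k+1)) mod (k+1) = (1 + j2*(k+1)) mod (k+1)" by simp
      moreover have "(j1*(k+1)) mod (k+1) = 0" by (simp only: mod_mult_self2_is_0)
      moreover have "(1 + j2*(k+1)) mod (k+1) = 1 mod (k+1)" by (rule mod_mult_self1)
      ultimately show False using assms(1) by simp
    qed
    have ne2: "ww lam (p + j1*(k+1)) \<noteq> ww lam (p + 1 + j2*(k+1))"
      using ne ww_props(2)[of "p + j1*(k+1)" lam] ww_props(2)[of "p + 1 + j2*(k+1)" lam] b1 b2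
      by (metis add_lessD1)
    show ?thesis
      using good_nbhd[OF b1] good_nbhd[OF b2] j1(2) j2(2) ne2 unfolding mu_def c_def
      by (metis prod.inject)
  qed
  show ?thesis using P1 P2 by blast
qed

end
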